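(* Let $0<p<1$ and let $(\mathbf{x}_n)_{n=1}^\infty$ be a SUCC basic sequence in $\ell_p$. Then there are constants $0<c\le C<\infty$ such that for every finite $A\subseteq\mathbb{N}$, \[ c\Big(\sum_{j=1}^\infty\Big(\sum_{n\in A}|\mathbf{e}_j^*(\mathbf{x}_n)|^2\Big)^{p/2}\Big)^{1/p}\le\Big\|\sum_{n\in A}\mathbf{x}_n\Big\|_p\le C\Big(\sum_{j=1}^\infty\Big(\sum_{n\in A}|\mathbf{e}_j^*(\mathbf{x}_n)|^2\Big)^{p/2}\Big)^{1/p}, \] where $\mathbf{e}_j^*(f)$ denotes the $j$-th coordinate of $f\in\ell_p$.
   Context: A basic sequence is a sequence that is a basis (dense span in its closed linear span, biorthogonal functionals existing, $\inf\|\mathbf{x}_n\|>0$, $\sup\|\mathbf{x}_n^*\|<\infty$) of its closed linear span. It is SUCC (suppression unconditional for constant coefficients) if there is $C\ge1$ such that $\|\sum_{n\in A}\varepsilon_n\mathbf{x}_n\|\le C\|\sum_{n\in B}\varepsilon_n\mathbf{x}_n\|$ whenever $A\subseteq B$ are finite subsets of $\mathbb{N}$ and $(\varepsilon_n)_{n\in B}$ are scalars of modulus one. *)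

theory Defs
  imports "HOL-Analysis.Analysis"
begin

definition lp_space :: "real \<Rightarrow> (nat \<Rightarrow> 'a::real_normed_field) set" where
  "lp_space p = {f. summable (\<lambda>j. norm (f j) powr p)}"

definition lp_norm :: "real \<Rightarrow> (nat \<Rightarrow> 'a::real_normed_field) \<Rightarrow> real" where
  "lp_norm p f = (\<Sum>j. norm (f j) powr p) powr (1 / p)"

definition lin_span_seq :: "(nat \<Rightarrow> nat \<Rightarrow> 'a::real_normed_field) \<Rightarrow> (nat \<Rightarrow> 'a) set" where
  "lin_span_seq x = {(\<lambda>j. \<Sum>n\<in>F. a n * x n j) | F a. finite F}"

definition closed_span_lp :: "real \<Rightarrow> (nat \<Rightarrow> nat \<Rightarrow> 'a::real_normed_field) \<Rightarrow> (nat \<Rightarrow> 'a) set" where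
  "closed_span_lp p x = {y \<in> lp_space p. \<forall>\<epsilon>>0. \<exists>z\<in>lin_span_seq x. lp_norm p (\<lambda>j. y j - z j) < \<epsilon>}"

text \<open>\<open>x\<close> is a basic sequence in \<open>\<ell>_p\<close>: a basis of its closed linear span
  \<open>X\<close>, i.e. the span is dense in \<open>X\<close> (automatic), there are biorthogonal
  continuous linear functionals \<open>x\<^sup>*_k\<close> on \<open>X\<close> with \<open>sup \<parallel>x\<^sup>*_k\<parallel> < \<infinity>\<close>, and
  \<open>inf \<parallel>x_n\<parallel> > 0\<close>.\<close>
definition basic_seq_lp :: "real \<Rightarrow> (nat \<Rightarrow> nat \<Rightarrow> 'a::real_normed_field) \<Rightarrow> bool" where
  "basic_seq_lp p x \<longleftrightarrow>
     (\<forall>n. x n \<in> lp_space p) \<and>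
     (\<exists>\<delta>>0. \<forall>n. lp_norm p (x n) \<ge> \<delta>) \<and>
     (\<exists>xs :: nat \<Rightarrow> (nat \<Rightarrow> 'a) \<Rightarrow> 'a. \<exists>K.
        (\<forall>k. \<forall>y\<in>closed_span_lp p x. \<forall>z\<in>closed_span_lp p x.
              xs k (\<lambda>j. y j + z j) = xs k y + xs k z) \<and>
        (\<forall>k. \<forall>y\<in>closed_span_lp p x. \<forall>c. xs k (\<lambda>j. c * y j) = c * xs k y) \<and>
        (\<forall>k. \<forall>y\<in>closed_span_lp p x. norm (xs k y) \<le> K * lp_norm p y) \<and>
        (\<forall>k n. xs k (x n) = (if k = n then 1 else 0)))"

text \<open>Suppression unconditional for constant coefficients.\<close>
definition SUCC_lp :: "real \<Rightarrow> (nat \<Rightarrow> nat \<Rightarrow> 'a::real_normed_field) \<Rightarrow> bool" where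
  "SUCC_lp p x \<longleftrightarrow>
     (\<exists>C\<ge>1. \<forall>A B \<epsilon>. finite B \<longrightarrow> A \<subseteq> B \<longrightarrow> (\<forall>n\<in>B. norm (\<epsilon> n) = 1) \<longrightarrow>
        lp_norm p (\<lambda>j. \<Sum>n\<in>A. \<epsilon> n * x n j) \<le> C * lp_norm p (\<lambda>j. \<Sum>n\<in>B. \<epsilon> n * x n j))"

end

theory Submission
  imports Defs "HOL-Computational_Algebra.Fundamental_Theorem_Algebra"
begin


definition ev :: "'a::real_normed_field \<Rightarrow> real poly \<Rightarrow> 'a" where
  "ev z p = poly (map_poly of_real p) z"

lemma ev_pCons: "ev z (pCons a p) = of_real a + z * ev z p"
  by (simp add: ev_def map_poly_pCons)

lemma ev_0[simp]: "ev z 0 = 0" by (simp add: ev_def)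

lemma ev_add: "ev z (p + q) = ev z p + ev z q"
proof (induction p arbitrary: q)
  case 0 then show ?case by simp
next
  case (pCons a p)
  show ?case
  proof (cases q rule: pCons_cases)
    case (pCons b q')
    have "ev z (p + q') = ev z p + ev z q'" by (rule pCons.IH)
    then show ?thesis using pCons by (simp add: ev_pCons algebra_simps)
  qed
qed

lemma ev_const: "ev z [:c:] = of_real c" by (simp add: ev_pCons)

lemma ev_smult: "ev z (smult c p) = of_real c * ev z p"
  by (induction p) (auto simp: ev_pCons algebra_simps)

lemma ev_mult: "ev z (p * q) = ev z p * ev z q"
  by (induction p) (auto simp: ev_pCons ev_add ev_smult algebra_simps)

lemma ev_1: "ev z 1 = 1" using ev_const[of z 1] by (simp add: one_pCons)

lemma ev_power: "ev z (p ^ n) = ev z p ^ n"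
  by (induction n) (auto simp: ev_mult ev_1)

lemma ev_real: "ev (of_real x) p = of_real (poly p x)"
  by (induction p) (auto simp: ev_pCons)


lemma deg1_poly:
  assumes "degree (r::real poly) \<le> 1"
  shows "r = [:coeff r 0, coeff r 1:]"
proof (rule poly_eqI)
  fix n show "coeff r n = coeff [:coeff r 0, coeff r 1:] n"
  proof (cases n)
    case 0 then show ?thesis by simp
  next
    case (Suc k) then show ?thesis
      using assms by (cases k) (auto simp: coeff_eq_0)
  qed
qed

lemma complex_root_quad:
  fixes \<alpha> :: complex
  shows "ev \<alpha> [:(cmod \<alpha>)^2, -2 * Re \<alpha>, 1:] = 0"
proof -
  have "(cmod \<alpha>)^2 = (Re \<alpha>)^2 + (Im \<alpha>)^2" by (rule cmod_power2)
  then show ?thesis by (simp add: ev_pCons complex_eq_iff power2_eq_square algebra_simps)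
qed

lemma poly_bound:
  fixes z :: "'a::real_normed_field"
  assumes minq: "\<And>b c. b^2 \<le> 4*c \<Longrightarrow> m \<le> norm (ev z [:c, -b, 1:])" and m0: "m \<ge> 0"
  shows "(\<forall>x. poly h x \<noteq> 0) \<Longrightarrow> \<bar>lead_coeff h\<bar> * m ^ (degree h div 2) \<le> norm (ev z h)"
proof (induction "degree h" arbitrary: h rule: less_induct)
  case less
  show ?case
  proof (cases "degree h = 0")
    case True
    then obtain c where h: "h = [:c:]" by (metis degree_eq_zeroE)
    then show ?thesis by (simp add: ev_const)
  next
    case False
    let ?hc = "map_poly complex_of_real h"
    have "\<not> (\<exists>a l. a \<noteq> 0 \<and> l = 0 \<and> ?hc = pCons a l)"
    proof
      assume "\<exists>a l. a \<noteq> 0 \<and> l = 0 \<and> ?hc = pCons a l"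
      then obtain a where "?hc = [:a:]" by auto
      then have "degree ?hc = 0" by simp
      moreover have "degree ?hc = degree h" by (rule degree_map_poly) simp
      ultimately show False using False by simp
    qed
    from fundamental_theorem_of_algebra_alt[OF this] obtain \<alpha> where
      "poly ?hc \<alpha> = 0" by blast
    then have root: "ev \<alpha> h = 0" by (simp add: ev_def)
    have im: "Im \<alpha> \<noteq> 0"
    proof
      assume "Im \<alpha> = 0"
      then have "\<alpha> = of_real (Re \<alpha>)" by (simp add: complex_eq_iff)
      then have "of_real (poly h (Re \<alpha>)) = (0::complex)" using root ev_real by metis
      then show False using less.prems by simp
    qed
    define q where "q = [:(cmod \<alpha>)^2, -2 * Re \<alpha>, 1:]"
    have q0: "q \<noteq> 0" by (simp add: q_def)
    have dq: "degree q = 2" by (simp add: q_def)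
    define s where "s = h div q"
    define r where "r = h mod q"
    have hsr: "h = s * q + r" by (simp add: s_def r_def)
    have "degree r \<le> 1" using degree_mod_less[OF q0, of h] dq r_def by auto
    then have r: "r = [:coeff r 0, coeff r 1:]" by (rule deg1_poly)
    have "ev \<alpha> q = 0" using complex_root_quad[of \<alpha>] by (simp add: q_def)
    moreover have "ev \<alpha> h = ev \<alpha> s * ev \<alpha> q + ev \<alpha> r" 
      by (subst hsr) (simp add: ev_add ev_mult)
    ultimately have "ev \<alpha> r = 0" using root by simp
    then have "of_real (coeff r 0) + \<alpha> * of_real (coeff r 1) = 0"
      by (subst (asm) r) (simp add: ev_pCons)
    then have "coeff r 1 = 0 \<and> coeff r 0 = 0" using im
      by (auto simp add: complex_eq_iff)
    then have "r = 0" using r by simp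
    then have h: "h = s * q" using hsr by simp
    have h0: "h \<noteq> 0" using False by auto
    then have s0: "s \<noteq> 0" using h by auto
    have ds: "degree h = degree s + 2" using h degree_mult_eq[OF s0 q0] dq by simp
    have lc: "lead_coeff h = lead_coeff s" using h lead_coeff_mult[of s q] by (simp add: q_def)
    have sroots: "\<forall>x. poly s x \<noteq> 0" using less.prems h by auto
    have IH: "\<bar>lead_coeff s\<bar> * m ^ (degree s div 2) \<le> norm (ev z s)"
      using less.hyps[of s] ds sroots by simp
    have qb: "m \<le> norm (ev z q)"
    proof -
      have "(2 * Re \<alpha>)^2 \<le> 4 * (cmod \<alpha>)^2"
      proof -
        have "(Re \<alpha>)^2 \<le> (cmod \<alpha>)^2" by (simp add: cmod_power2)
        then show ?thesis by (simp add: power_mult_distrib)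
      qed
      from minq[OF this] show ?thesis by (simp add: q_def)
    qed
    have "\<bar>lead_coeff h\<bar> * m ^ (degree h div 2) = (\<bar>lead_coeff s\<bar> * m ^ (degree s div 2)) * m"
      using ds lc by simp
    also have "\<dots> \<le> norm (ev z s) * norm (ev z q)"
      by (rule mult_mono[OF IH qb]) (use m0 in auto)
    also have "\<dots> = norm (ev z h)" by (simp add: h ev_mult norm_mult)
    finally show ?thesis .
  qed
qed


lemma ev_quad: "ev z [:c, -b, 1:] = of_real c - of_real b * z + z * z"
  by (simp add: ev_pCons algebra_simps)

lemma norm_tri3: "norm (x::'a::real_normed_vector) \<le> norm (x + y + w) + norm y + norm w"
proof -
  have "x = (x + y + w) - y - w" by simp
  then have "norm x \<le> norm (x + y + w - y) + norm w" by (metis norm_triangle_ineq4)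
  also have "norm (x + y + w - y) \<le> norm (x + y + w) + norm y" by (rule norm_triangle_ineq4)
  finally show ?thesis by simp
qed

lemma quad_coercive:
  fixes z :: "'a::real_normed_field"
  shows "c - \<bar>b\<bar> * norm z - (norm z)^2 \<le> norm (ev z [:c, -b, 1:])"
proof -
  define a where "a = ev z [:c, -b, 1:]"
  have e: "(of_real c :: 'a) = a + of_real b * z + (- (z*z))" by (simp add: a_def ev_quad)
  have "norm (a + of_real b * z + (- (z*z))) \<le> norm a + norm (of_real b * z) + norm (- (z*z))"
    using norm_triangle_ineq[of "a + of_real b * z" "- (z*z)"] norm_triangle_ineq[of a "of_real b * z"]
    by linarith
  then have "\<bar>c\<bar> \<le> norm a + \<bar>b\<bar> * norm z + (norm z)^2"
    by (simp only: e[symmetric]) (simp add: norm_mult power2_eq_square)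
  then show ?thesis unfolding a_def by linarith
qed

lemma quad_big:
  fixes b c n :: real
  assumes "n \<ge> 0" "b^2 \<le> 4*c" "c > 16*(n+1)^2"
  shows "c - \<bar>b\<bar> * n - n^2 > n^2"
proof -
  define sq where "sq = sqrt c"
  have "0 \<le> b^2" by simp
  then have c0: "c \<ge> 0" using assms by linarith
  have sc: "sq^2 = c" "sq \<ge> 0" using c0 by (auto simp: sq_def)
  have "b^2 \<le> 4 * sq^2" using assms(2) sc by simp
  then have "sqrt (b^2) \<le> sqrt (4 * sq^2)" by (rule real_sqrt_le_mono)
  then have bs: "\<bar>b\<bar> \<le> 2 * sq" using sc by (simp add: real_sqrt_mult sq_def)
  have s4: "sq > 4*(n+1)"
  proof -
    have "sqrt (16*(n+1)^2) < sq" using assms(3) by (simp add: sq_def)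
    moreover have "sqrt (16*(n+1)^2) = 4*(n+1)" using assms(1) by (simp add: real_sqrt_mult)
    ultimately show ?thesis by simp
  qed
  have "\<bar>b\<bar> * n \<le> 2 * sq * n" using bs assms(1) by (rule mult_right_mono)
  moreover have "sq * (sq - 2*n) > (4*n+4) * (2*n+4)"
    using s4 assms(1) by (intro mult_strict_mono) auto
  moreover have "sq * (sq - 2*n) = c - 2* sq*n" using sc by (simp add: power2_eq_square algebra_simps)
  moreover have "(4*n+4) * (2*n+4) = 8*(n*n) + 24*n + 16" by (simp add: algebra_simps)
  moreover have "0 \<le> n*n" by simp
  ultimately have "\<bar>b\<bar> * n + 2*(n*n) < c" using assms(1) by linarith
  then show ?thesis by (simp add: power2_eq_square)
qed

lemma min_exists:
  fixes z :: "'a::real_normed_field"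
  shows "\<exists>b0 c0. b0^2 \<le> 4*c0 \<and> (\<forall>b c. b^2 \<le> 4*c \<longrightarrow> norm (ev z [:c0, -b0, 1:]) \<le> norm (ev z [:c, -b, 1:]))"
proof -
  define R where "R = 16 * (norm z + 1)^2"
  define g where "g = (\<lambda>x::real\<times>real. norm (of_real (snd x) - of_real (fst x) * z + z * z))"
  define K where "K = {x::real\<times>real. (fst x)^2 \<le> 4 * snd x} \<inter> {x. snd x \<le> R}"
  have gev: "g (b, c) = norm (ev z [:c, -b, 1:])" for b c by (simp add: g_def ev_quad)
  have "closed K" unfolding K_def
    by (intro closed_Int closed_Collect_le continuous_intros)
  moreover have "bounded K"
  proof -
    have "norm x \<le> 1 + 5 * R" if "x \<in> K" for x
    proof -
      obtain b c where x: "x = (b, c)" by (cases x)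
      have h: "b^2 \<le> 4*c" "c \<le> R" using that by (auto simp: K_def x)
      have "0 \<le> (\<bar>b\<bar> - 1)^2" by simp
      moreover have "(\<bar>b\<bar> - 1)^2 = b^2 - 2*\<bar>b\<bar> + 1" by (simp add: power2_diff)
      ultimately have "\<bar>b\<bar> \<le> 1 + b^2" by linarith
      moreover have "0 \<le> b^2" by simp
      then have "c \<ge> 0" using h(1) by linarith
      ultimately have "norm b + norm c \<le> 1 + 5 * R" using h by simp
      then show ?thesis using norm_Pair_le[of b c] x by simp
    qed
    then show ?thesis unfolding bounded_iff by blast
  qed
  ultimately have "compact K" using compact_eq_bounded_closed by blast
  moreover have "(0, 0) \<in> K" by (simp add: K_def R_def)
  moreover have "continuous_on K g" unfolding g_def by (intro continuous_intros)
  ultimately obtain x0 where x0: "x0 \<in> K" "\<forall>y\<in>K. g x0 \<le> g y"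
    using continuous_attains_inf[of K g] by blast
  obtain b0 c0 where x0e: "x0 = (b0, c0)" by (cases x0)
  have g00: "g (0,0) = (norm z)^2" by (simp add: g_def norm_mult power2_eq_square)
  have "g x0 \<le> g (b, c)" if "b^2 \<le> 4*c" for b c
  proof (cases "c \<le> R")
    case True then show ?thesis using x0 that by (auto simp: K_def)
  next
    case False
    have "g x0 \<le> g (0,0)" using x0 by (auto simp: K_def R_def)
    also have "\<dots> < c - \<bar>b\<bar> * norm z - (norm z)^2" using quad_big[of "norm z" b c] that False g00
      by (simp add: R_def)
    also have "\<dots> \<le> g (b, c)" using quad_coercive[of c b z] gev by simp
    finally show ?thesis by simp
  qed
  then show ?thesis using x0 x0e gev by (intro exI[of _ b0] exI[of _ c0]) (auto simp: K_def)
qed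


lemma quad_nonneg:
  fixes b c x :: real
  assumes "b^2 \<le> 4*c"
  shows "poly [:c, -b, 1:] x \<ge> 0"
proof -
  have "poly [:c, -b, 1:] x = (x - b/2)^2 + (c - b^2/4)"
    by (simp add: power2_eq_square algebra_simps)
  moreover have "(x - b/2)^2 \<ge> 0" by simp
  ultimately show ?thesis using assms by linarith
qed

lemma small_pow_arg:
  fixes a m :: real
  assumes "m > 0" "\<And>k. a \<le> m + m * (1/2)^(2*k+1)"
  shows "a \<le> m"
proof (rule ccontr)
  assume "\<not> a \<le> m"
  then have d: "(a - m) / m > 0" using assms(1) by simp
  obtain k where k: "(1/2::real)^k < (a - m) / m" using real_arch_pow_inv[OF d, of "1/2"] by auto
  have "(1/2::real)^(2*k+1) \<le> (1/2)^k" by (rule power_decreasing) auto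
  then have h1: "(1/2::real)^(2*k+1) < (a - m)/m" using k by linarith
  have "m * (1/2)^(2*k+1) < m * ((a - m)/m)" by (rule mult_strict_left_mono[OF h1 assms(1)])
  then have "m * (1/2)^(2*k+1) < a - m" using assms(1) by simp
  with assms(2)[of k] show False by simp
qed

lemma quad_step:
  fixes z :: "'a::real_normed_field"
  assumes minq: "\<And>b c. b^2 \<le> 4*c \<Longrightarrow> m \<le> norm (ev z [:c, -b, 1:])" and m0: "m > 0"
    and bc: "b0^2 \<le> 4*c" and eqm: "norm (ev z [:c, -b0, 1:]) = m"
  shows "norm (ev z [:c + m/2, -b0, 1:]) = m"
proof -
  define \<epsilon> where "\<epsilon> = m/2"
  have e0: "\<epsilon> > 0" using m0 by (simp add: \<epsilon>_def)
  define f where "f = [:c, -b0, 1:]"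
  define P where "P = [:c + \<epsilon>, -b0, 1:]"
  have bc': "b0^2 \<le> 4*(c+\<epsilon>)" using bc e0 by simp
  have "norm (ev z P) \<le> m + m * (1/2)^(2*k+1)" for k
  proof -
    define n where "n = 2*k+1"
    have n1: "n \<ge> 1" and odd: "odd n" by (auto simp: n_def)
    define H where "H = (\<Sum>i<n. [:-\<epsilon>:]^(n - Suc i) * f^i)"
    have e1: "f^n - [:-\<epsilon>:]^n = (f - [:-\<epsilon>:]) * H" unfolding H_def by (rule power_diff_sumr2)
    have e2: "[:-\<epsilon>:]^n = [:-(\<epsilon>^n):]" by (simp only: poly_const_pow power_minus_odd[OF odd])
    have e3: "f - [:-\<epsilon>:] = P" by (simp add: f_def P_def)
    have e4: "[:-(\<epsilon>^n):] = - [:\<epsilon>^n:]" by simp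
    have PH: "P * H = f^n + [:\<epsilon>^n:]" using e1 by (simp only: e2 e3 e4 diff_minus_eq_add)
    have f0: "f \<noteq> 0" and df: "degree f = 2" and lf: "lead_coeff f = 1" by (auto simp: f_def)
    have dG: "degree (f^n + [:\<epsilon>^n:]) = 2*n"
    proof -
      have "degree (f^n) = 2*n" using degree_power_eq[OF f0, of n] df by simp
      moreover have "degree [:\<epsilon>^n:] < degree (f^n)" using calculation n1 by simp
      ultimately show ?thesis using degree_add_eq_left[of "[:\<epsilon>^n:]" "f^n"] by simp
    qed
    have lG: "lead_coeff (f^n + [:\<epsilon>^n:]) = 1"
    proof -
      have "degree (f^n) = 2*n" using degree_power_eq[OF f0, of n] df by simp
      then have "coeff (f^n) (2*n) = 1" using lead_coeff_power[of f n] lf by simp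
      moreover have "coeff [:\<epsilon> ^ n:] (2 * n) = 0" using n1 by (cases "2*n") auto
      ultimately show ?thesis using dG by simp
    qed
    have G0: "f^n + [:\<epsilon>^n:] \<noteq> 0" using lG by (metis coeff_0 zero_neq_one)
    have H0: "H \<noteq> 0" and P0: "P \<noteq> 0" using G0 PH by auto
    have dP: "degree P = 2" and lP: "lead_coeff P = 1" by (auto simp: P_def)
    have dH: "degree H = 2*n - 2" using degree_mult_eq[OF P0 H0] PH dG dP by simp
    have lH: "lead_coeff H = 1" using lead_coeff_mult[of P H] PH lG lP by simp
    have rootsH: "\<forall>x. poly H x \<noteq> 0"
    proof
      fix x
      have "poly P x * poly H x = poly f x ^ n + \<epsilon>^n" using arg_cong[OF PH, of "\<lambda>p. poly p x"] by simp
      moreover have "poly f x ^ n \<ge> 0" using quad_nonneg[OF bc] by (simp add: f_def)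
      moreover have "\<epsilon>^n > 0" using e0 by simp
      ultimately show "poly H x \<noteq> 0" by auto
    qed
    have "\<bar>lead_coeff H\<bar> * m ^ (degree H div 2) \<le> norm (ev z H)"
      using poly_bound[OF minq _ rootsH] m0 by auto
    moreover have "degree H div 2 = n - 1" using dH n1 by simp
    ultimately have Hb: "m ^ (n - 1) \<le> norm (ev z H)" using lH by simp
    have "norm (ev z P) * m ^ (n - 1) \<le> norm (ev z P) * norm (ev z H)"
      using Hb by (intro mult_left_mono) auto
    also have "\<dots> = norm (ev z f ^ n + of_real (\<epsilon>^n))"
    proof -
      have "ev z P * ev z H = ev z f ^ n + of_real (\<epsilon>^n)"
        using arg_cong[OF PH, of "ev z"] by (simp only: ev_mult ev_add ev_power ev_const)
      then show ?thesis by (metis norm_mult)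
    qed
    also have "\<dots> \<le> norm (ev z f ^ n) + norm (of_real (\<epsilon>^n) :: 'a)"
      by (rule norm_triangle_ineq)
    also have "\<dots> = m ^ n + \<epsilon>^n"
      using eqm e0 by (simp add: f_def norm_power)
    also have "\<dots> = m ^ (n - 1) * (m + m * (1/2)^n)"
    proof -
      have mn: "m^n = m^(n-1) * m" using n1 power_minus_mult[of n m] by simp
      have "\<epsilon>^n = m^n * (1/2)^n" by (simp add: \<epsilon>_def power_mult_distrib[symmetric])
      then show ?thesis using mn by (simp add: distrib_left mult.assoc)
    qed
    finally have "norm (ev z P) * m ^ (n - 1) \<le> (m + m * (1/2)^n) * m ^ (n - 1)" by (simp add: mult.commute)
    moreover have pos: "m^(n-1) > 0" using m0 by simp
    ultimately have "norm (ev z P) \<le> m + m * (1/2)^n" by (rule mult_right_le_imp_le)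
    then show ?thesis by (simp only: n_def)
  qed
  then have "norm (ev z P) \<le> m" by (intro small_pow_arg[OF m0]) auto
  moreover have "m \<le> norm (ev z P)" using minq[OF bc'] by (simp add: P_def)
  ultimately show ?thesis by (simp add: P_def \<epsilon>_def)
qed


lemma quad_root:
  fixes z :: "'a::real_normed_field"
  shows "\<exists>b c. b^2 \<le> 4*c \<and> ev z [:c, -b, 1:] = 0"
proof -
  obtain b0 c0 where bc0: "b0^2 \<le> 4*c0"
    and mn: "\<And>b c. b^2 \<le> 4*c \<Longrightarrow> norm (ev z [:c0, -b0, 1:]) \<le> norm (ev z [:c, -b, 1:])"
    using min_exists[of z] by blast
  define m where "m = norm (ev z [:c0, -b0, 1:])"
  show ?thesis
  proof (cases "m = 0")
    case True then show ?thesis using bc0 by (auto simp: m_def)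
  next
    case False
    then have m0: "m > 0" by (simp add: m_def)
    have minq: "\<And>b c. b^2 \<le> 4*c \<Longrightarrow> m \<le> norm (ev z [:c, -b, 1:])" using mn by (simp add: m_def)
    have ind: "b0^2 \<le> 4*(c0 + real k * (m/2)) \<and> norm (ev z [:c0 + real k * (m/2), -b0, 1:]) = m" for k
    proof (induction k)
      case 0 then show ?case using bc0 by (simp add: m_def)
    next
      case (Suc k)
      have e: "c0 + real (Suc k) * (m/2) = (c0 + real k * (m/2)) + m/2" by (simp add: algebra_simps)
      have e2: "4*(c0 + real k * (m/2) + m/2) = 4*(c0 + real k * (m/2)) + 2*m" by (simp add: algebra_simps)
      have "b0^2 \<le> 4*(c0 + real (Suc k) * (m/2))" using conjunct1[OF Suc.IH] m0 unfolding e e2 by linarith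
      moreover have "norm (ev z [:c0 + real (Suc k) * (m/2), -b0, 1:]) = m"
        unfolding e using quad_step[OF minq m0] Suc.IH by blast
      ultimately show ?case by blast
    qed
    obtain k where k: "m + \<bar>b0\<bar> * norm z + (norm z)^2 - c0 < real k * (m/2)"
      using ex_less_of_nat_mult[of "m/2" "m + \<bar>b0\<bar> * norm z + (norm z)^2 - c0"] m0 by auto
    have "(c0 + real k * (m/2)) - \<bar>b0\<bar> * norm z - (norm z)^2 \<le> m"
      using quad_coercive[of "c0 + real k * (m/2)" b0 z] ind[of k] by simp
    with k show ?thesis by simp
  qed
qed


lemma cmul_w:
  fixes w :: "'a::real_normed_field"
  assumes w: "w * w = -1"
  shows "(of_real x + of_real y * w) * (of_real p + of_real q * w) = of_real (x*p - y*q) + of_real (x*q + y*p) * w"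
proof -
  have "(of_real x + of_real y * w) * (of_real p + of_real q * w) =
        of_real (x*p) + of_real (x*q + y*p) * w + of_real (y*q) * (w * w)"
    by (simp add: algebra_simps)
  also have "\<dots> = of_real (x*p - y*q) + of_real (x*q + y*p) * w" using w by (simp add: algebra_simps)
  finally show ?thesis .
qed

lemma unit_le1:
  fixes w :: "'a::real_normed_field"
  assumes w: "w * w = -1" and xy: "x^2 + y^2 = 1"
  shows "norm (of_real x + of_real y * w) \<le> 1"
proof (rule ccontr)
  define u where "u = of_real x + of_real y * w"
  assume "\<not> norm (of_real x + of_real y * w) \<le> 1"
  then have u1: "norm u > 1" by (simp add: u_def)
  have nw: "norm w = 1"
  proof -
    have "norm (w * w) = 1" using w by simp
    then have "norm w ^ 2 = 1" by (simp add: norm_mult power2_eq_square)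
    then have "norm w = 1 \<or> norm w = -1" by (simp add: power2_eq_1_iff)
    then show ?thesis using norm_ge_zero[of w] by linarith
  qed
  have pw: "\<exists>p q. p^2 + q^2 = 1 \<and> u^n = of_real p + of_real q * w" for n
  proof (induction n)
    case 0 then show ?case by (intro exI[of _ 1] exI[of _ 0]) simp
  next
    case (Suc n)
    then obtain p q where pq: "p^2 + q^2 = 1" "u^n = of_real p + of_real q * w" by blast
    have "u^Suc n = u * u^n" by (rule power_Suc)
    also have "\<dots> = u * (of_real p + of_real q * w)" by (simp only: pq(2))
    also have "\<dots> = of_real (x*p - y*q) + of_real (x*q + y*p) * w"
      unfolding u_def by (rule cmul_w[OF w])
    finally have "u^Suc n = of_real (x*p - y*q) + of_real (x*q + y*p) * w" .
    moreover have "(x*p - y*q)^2 + (x*q + y*p)^2 = (x^2 + y^2) * (p^2 + q^2)"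
      by (simp add: power2_eq_square algebra_simps)
    ultimately show ?case using xy pq(1) by (intro exI[of _ "x*p - y*q"] exI[of _ "x*q + y*p"]) simp
  qed
  have nb: "norm u ^ n \<le> 2" for n
  proof -
    obtain p q where pq: "p^2 + q^2 = 1" "u^n = of_real p + of_real q * w" using pw by blast
    have "p^2 \<le> 1" "q^2 \<le> 1" using pq(1) zero_le_power2[of p] zero_le_power2[of q] by linarith+
    then have "\<bar>p\<bar> \<le> 1" "\<bar>q\<bar> \<le> 1" using abs_square_le_1 by blast+
    moreover have "norm (u^n) \<le> \<bar>p\<bar> + \<bar>q\<bar>"
    proof -
      have "norm (u^n) \<le> norm (of_real p :: 'a) + norm (of_real q * w)"
        unfolding pq(2) by (rule norm_triangle_ineq)
      also have "\<dots> = \<bar>p\<bar> + \<bar>q\<bar>" using nw by (simp add: norm_mult)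
      finally show ?thesis .
    qed
    ultimately show ?thesis by (simp add: norm_power)
  qed
  obtain n where "2 < norm u ^ n" using real_arch_pow[OF u1] by blast
  with nb[of n] show False by linarith
qed

lemma euclid:
  fixes w :: "'a::real_normed_field"
  assumes w: "w * w = -1"
  shows "norm (of_real x + of_real y * w) = sqrt (x^2 + y^2)"
proof (cases "x^2 + y^2 = 0")
  case True
  then have "x = 0" "y = 0" by (auto simp: add_nonneg_eq_0_iff)
  then show ?thesis by simp
next
  case False
  define r where "r = sqrt (x^2 + y^2)"
  have r0: "r > 0" using False by (simp add: r_def add_pos_nonneg sum_power2_gt_zero_iff)
  have rr: "r^2 = x^2 + y^2" by (simp add: r_def)
  define x' where "x' = x / r"
  define y' where "y' = y / r"
  have "x'^2 + y'^2 = (x^2 + y^2)/r^2" by (simp add: x'_def y'_def power_divide add_divide_distrib)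
  then have u1: "x'^2 + y'^2 = 1" using rr r0 False by simp
  have u2: "x'^2 + (-y')^2 = 1" using u1 by simp
  define u where "u = (of_real x' + of_real y' * w :: 'a)"
  define v where "v = (of_real x' + of_real (-y') * w :: 'a)"
  have nu: "norm u \<le> 1" using unit_le1[OF w u1] by (simp add: u_def)
  have nv: "norm v \<le> 1" using unit_le1[OF w u2] by (simp add: v_def)
  have "u * v = of_real (x'*x' - y'*(-y')) + of_real (x'*(-y') + y'*x') * w"
    unfolding u_def v_def by (rule cmul_w[OF w])
  also have "\<dots> = 1" using u1 by (simp add: power2_eq_square)
  finally have "norm u * norm v = 1" by (metis norm_mult norm_one)
  then have "norm u = 1" using nu nv
    by (metis mult_left_le mult_cancel_right2 norm_ge_zero order_antisym mult_le_one)
  moreover have "of_real x + of_real y * w = of_real r * u"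
    using r0 by (simp add: u_def x'_def y'_def algebra_simps of_real_def scaleR_scaleR)
  ultimately show ?thesis using r0 by (simp add: norm_mult r_def)
qed

lemma para1:
  fixes z :: "'a::real_normed_field"
  shows "norm (z + 1)^2 + norm (z - 1)^2 = 2 * norm z ^2 + 2"
proof -
  obtain b c where bc: "b^2 \<le> 4*c" "ev z [:c, -b, 1:] = 0" using quad_root[of z] by blast
  define a where "a = b/2"
  define d where "d = c - a^2"
  have d0: "d \<ge> 0" using bc(1) by (simp add: d_def a_def power_divide)
  have sq: "(z - of_real a) * (z - of_real a) = - of_real d"
  proof -
    have "of_real c - of_real b * z + z * z = 0" using bc(2) by (simp add: ev_quad)
    then have e: "z * z = of_real b * z - of_real c" by (simp add: algebra_simps)
    have b2: "b = 2 * a" by (simp add: a_def)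
    have "(z - of_real a) * (z - of_real a) = z * z - of_real (2 * a) * z + of_real (a^2)"
      by (simp add: algebra_simps power2_eq_square)
    also have "\<dots> = of_real (a^2 - c)" using e b2 by (simp add: algebra_simps)
    finally show ?thesis by (simp add: d_def)
  qed
  show ?thesis
  proof (cases "d = 0")
    case True
    then have "z = of_real a" using sq by simp
    then have "norm (z + 1) = \<bar>a + 1\<bar>" "norm (z - 1) = \<bar>a - 1\<bar>" "norm z = \<bar>a\<bar>"
      by (metis norm_of_real of_real_1 of_real_add of_real_diff)+
    then show ?thesis by (simp add: power2_eq_square algebra_simps)
  next
    case False
    then have dp: "d > 0" using d0 by simp
    define s where "s = sqrt d"
    have s0: "s > 0" and ss: "s * s = d" using dp by (auto simp: s_def)
    define w where "w = (z - of_real a) / of_real s"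
    have ww: "w * w = -1"
    proof -
      have "w * w = ((z - of_real a) * (z - of_real a)) / (of_real s * of_real s)"
        by (simp add: w_def)
      also have "\<dots> = - of_real d / of_real d" using sq ss by (simp flip: of_real_mult)
      also have "\<dots> = -1" using dp by simp
      finally show ?thesis .
    qed
    have zw: "z = of_real a + of_real s * w" using s0 by (simp add: w_def)
    have n1: "norm (z + 1) = sqrt ((a+1)^2 + s^2)"
    proof -
      have "z + 1 = of_real (a+1) + of_real s * w" using zw by (simp add: algebra_simps)
      then show ?thesis by (simp only: euclid[OF ww])
    qed
    have n2: "norm (z - 1) = sqrt ((a-1)^2 + s^2)"
    proof -
      have "z - 1 = of_real (a-1) + of_real s * w" using zw by (simp add: algebra_simps)
      then show ?thesis by (simp only: euclid[OF ww])
    qed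
    have n3: "norm z = sqrt (a^2 + s^2)" using zw euclid[OF ww, of a s] by simp
    have e1: "norm (z + 1)^2 = (a+1)^2 + s^2" and e2: "norm (z - 1)^2 = (a-1)^2 + s^2"
      and e3: "norm z ^2 = a^2 + s^2"
      using n1 n2 n3 by simp_all
    have e4: "(a+1)^2 + s^2 + ((a-1)^2 + s^2) = 2*(a^2+s^2) + 2"
      by (simp add: power2_eq_square algebra_simps)
    show ?thesis unfolding e1 e2 e3 by (rule e4)
  qed
qed

lemma parallelogram:
  fixes u v :: "'a::real_normed_field"
  shows "norm (u + v)^2 + norm (u - v)^2 = 2 * norm u ^2 + 2 * norm v ^2"
proof (cases "v = 0")
  case True then show ?thesis by simp
next
  case False
  define z where "z = u / v"
  have "u + v = (z + 1) * v" "u - v = (z - 1) * v" "u = z * v" using False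
    by (simp_all add: z_def algebra_simps)
  then have "norm (u + v) = norm (z + 1) * norm v" "norm (u - v) = norm (z - 1) * norm v"
    "norm u = norm z * norm v" by (metis norm_mult)+
  then have eq1: "norm (u + v)^2 + norm (u - v)^2 = (norm (z + 1)^2 + norm (z - 1)^2) * norm v ^2"
    and eq2: "norm u ^2 = norm z ^2 * norm v ^2"
    by (simp_all add: power_mult_distrib algebra_simps)
  have "norm (u + v)^2 + norm (u - v)^2 = (2 * norm z ^2 + 2) * norm v ^2"
    using eq1 by (simp only: para1)
  then show ?thesis using eq2 by (simp add: algebra_simps)
qed



definition ss :: "(nat \<Rightarrow> 'a::real_normed_field) \<Rightarrow> nat set \<Rightarrow> nat set \<Rightarrow> 'a" where
  "ss a A D = (\<Sum>n\<in>A. if n \<in> D then - a n else a n)"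

lemma ss_empty[simp]: "ss a {} D = 0" by (simp add: ss_def)

lemma ss_insert_out:
  assumes "finite A" "x \<notin> A" "D \<subseteq> A"
  shows "ss a (insert x A) D = ss a A D + a x"
  using assms by (auto simp: ss_def sum.insert)

lemma ss_insert_in:
  assumes "finite A" "x \<notin> A" "D \<subseteq> A"
  shows "ss a (insert x A) (insert x D) = ss a A D - a x"
proof -
  have "ss a (insert x A) (insert x D) = - a x + (\<Sum>n\<in>A. if n \<in> insert x D then - a n else a n)"
    using assms by (simp add: ss_def sum.insert)
  also have "(\<Sum>n\<in>A. if n \<in> insert x D then - a n else a n) = ss a A D"
    unfolding ss_def using assms(2) by (intro sum.cong) auto
  finally show ?thesis by simp
qed

lemma pow_insert_sum:
  fixes g :: "'a::real_normed_field \<Rightarrow> 'b::comm_monoid_add"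
  assumes A: "finite A" and x: "x \<notin> A"
  shows "(\<Sum>D\<in>Pow (insert x A). g (ss a (insert x A) D)) =
         (\<Sum>D\<in>Pow A. g (ss a A D + a x) + g (ss a A D - a x))"
proof -
  have disj: "Pow A \<inter> insert x ` Pow A = {}" using x by auto
  have inj: "inj_on (insert x) (Pow A)" using x unfolding inj_on_def by (auto simp: insert_ident)
  have "(\<Sum>D\<in>Pow (insert x A). g (ss a (insert x A) D)) =
        (\<Sum>D\<in>Pow A. g (ss a (insert x A) D)) + (\<Sum>D\<in>insert x ` Pow A. g (ss a (insert x A) D))"
    unfolding Pow_insert using A disj by (intro sum.union_disjoint) auto
  also have "(\<Sum>D\<in>insert x ` Pow A. g (ss a (insert x A) D)) = (\<Sum>D\<in>Pow A. g (ss a (insert x A) (insert x D)))"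
    using inj by (simp add: sum.reindex)
  also have "\<dots> = (\<Sum>D\<in>Pow A. g (ss a A D - a x))"
    using A x by (intro sum.cong) (auto simp: ss_insert_in)
  also have "(\<Sum>D\<in>Pow A. g (ss a (insert x A) D)) = (\<Sum>D\<in>Pow A. g (ss a A D + a x))"
    using A x by (intro sum.cong) (auto simp: ss_insert_out)
  finally show ?thesis by (simp add: sum.distrib)
qed

lemma moment2:
  fixes a :: "nat \<Rightarrow> 'a::real_normed_field"
  assumes "finite A"
  shows "(\<Sum>D\<in>Pow A. norm (ss a A D)^2) = 2^card A * (\<Sum>n\<in>A. norm (a n)^2)"
  using assms
proof (induction A rule: finite_induct)
  case empty then show ?case by simp
next
  case (insert x A)
  have "(\<Sum>D\<in>Pow (insert x A). norm (ss a (insert x A) D)^2) =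
        (\<Sum>D\<in>Pow A. norm (ss a A D + a x)^2 + norm (ss a A D - a x)^2)"
    by (rule pow_insert_sum[OF insert(1,2)])
  also have "\<dots> = (\<Sum>D\<in>Pow A. 2 * norm (ss a A D)^2 + 2 * norm (a x)^2)"
    by (intro sum.cong refl parallelogram)
  also have "\<dots> = 2 * (\<Sum>D\<in>Pow A. norm (ss a A D)^2) + 2 * 2^card A * norm (a x)^2"
    using insert(1) by (simp add: sum.distrib sum_distrib_left card_Pow)
  also have "\<dots> = 2^card (insert x A) * (\<Sum>n\<in>insert x A. norm (a n)^2)"
    using insert by (simp add: algebra_simps)
  finally show ?case .
qed

lemma four_bound:
  fixes S b :: "'a::real_normed_field"
  shows "norm (S + b)^4 + norm (S - b)^4 \<le> 2 * (norm S^2)^2 + 12 * norm S^2 * norm b^2 + 2 * (norm b^2)^2"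
proof -
  define P where "P = norm (S + b)^2"
  define Q where "Q = norm (S - b)^2"
  define s where "s = norm S^2"
  define \<alpha> where "\<alpha> = norm b^2"
  have PQ: "P + Q = 2* s + 2*\<alpha>" unfolding P_def Q_def s_def \<alpha>_def by (rule parallelogram)
  have "\<bar>norm (S*S) - norm (b*b)\<bar> \<le> norm (S*S - b*b)" by (rule norm_triangle_ineq3)
  moreover have "norm (S*S - b*b) = sqrt (P * Q)"
  proof -
    have "S*S - b*b = (S+b)*(S-b)" by (simp add: algebra_simps)
    then have "norm (S*S - b*b) = norm (S+b) * norm (S-b)" by (simp add: norm_mult)
    then show ?thesis by (simp add: P_def Q_def real_sqrt_mult)
  qed
  ultimately have "\<bar>s - \<alpha>\<bar> \<le> sqrt (P*Q)" by (simp add: s_def \<alpha>_def norm_mult power2_eq_square)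
  then have "(s - \<alpha>)^2 \<le> (sqrt (P*Q))^2" by (metis abs_ge_zero power2_abs power_mono)
  then have pq: "(s - \<alpha>)^2 \<le> P*Q" by (simp add: P_def Q_def)
  have "norm (S + b)^4 + norm (S - b)^4 = P^2 + Q^2" by (simp add: P_def Q_def flip: power_mult)
  also have "\<dots> = (P + Q)^2 - 2*(P*Q)" by (simp add: power2_eq_square algebra_simps)
  also have "\<dots> \<le> (2* s + 2*\<alpha>)^2 - 2*(s - \<alpha>)^2" using PQ pq by simp
  also have "\<dots> = 2 * s^2 + 12 * s * \<alpha> + 2 * \<alpha>^2" by (simp add: power2_eq_square algebra_simps)
  finally show ?thesis by (simp add: s_def \<alpha>_def)
qed

lemma moment4:
  fixes a :: "nat \<Rightarrow> 'a::real_normed_field"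
  assumes "finite A"
  shows "(\<Sum>D\<in>Pow A. norm (ss a A D)^4) \<le> 3 * 2^card A * (\<Sum>n\<in>A. norm (a n)^2)^2"
  using assms
proof (induction A rule: finite_induct)
  case empty then show ?case by simp
next
  case (insert x A)
  define \<sigma> where "\<sigma> = (\<Sum>n\<in>A. norm (a n)^2)"
  define \<alpha> where "\<alpha> = norm (a x)^2"
  define N where "N = (2::real)^card A"
  have s0: "\<sigma> \<ge> 0" "\<alpha> \<ge> 0" by (auto simp: \<sigma>_def \<alpha>_def intro: sum_nonneg)
  have m2: "(\<Sum>D\<in>Pow A. norm (ss a A D)^2) = N * \<sigma>" using moment2[OF insert(1)] by (simp add: N_def \<sigma>_def)
  have "(\<Sum>D\<in>Pow (insert x A). norm (ss a (insert x A) D)^4) =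
        (\<Sum>D\<in>Pow A. norm (ss a A D + a x)^4 + norm (ss a A D - a x)^4)"
    by (rule pow_insert_sum[OF insert(1,2)])
  also have "\<dots> \<le> (\<Sum>D\<in>Pow A. 2 * (norm (ss a A D)^2)^2 + 12 * norm (ss a A D)^2 * \<alpha> + 2 * \<alpha>^2)"
    unfolding \<alpha>_def by (intro sum_mono four_bound)
  also have "\<dots> = 2 * (\<Sum>D\<in>Pow A. norm (ss a A D)^4) + 12 * \<alpha> * (\<Sum>D\<in>Pow A. norm (ss a A D)^2) + 2 * N * \<alpha>^2"
    using insert(1) by (simp add: sum.distrib sum_distrib_left sum_distrib_right card_Pow N_def algebra_simps flip: power_mult)
  also have "\<dots> \<le> 2 * (3 * N * \<sigma>^2) + 12 * \<alpha> * (N * \<sigma>) + 2 * N * \<alpha>^2"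
    using insert(3) m2 by (simp add: N_def \<sigma>_def)
  also have "\<dots> \<le> 3 * (2 * N) * (\<sigma> + \<alpha>)^2"
  proof -
    have "N \<ge> 0" by (simp add: N_def)
    then have "0 \<le> 2 * N * (2 * \<alpha>^2)" using s0 by simp
    then show ?thesis by (simp add: power2_eq_square algebra_simps)
  qed
  also have "\<dots> = 3 * 2^card (insert x A) * (\<Sum>n\<in>insert x A. norm (a n)^2)^2"
    using insert by (simp add: N_def \<sigma>_def \<alpha>_def algebra_simps)
  finally show ?case .
qed


lemma ptU:
  fixes X t p :: real
  assumes X: "0 \<le> X" and t: "0 < t" and p: "0 < p" "p < 2"
  shows "X powr p \<le> t powr p + X^2 * t powr (p - 2)"
proof (cases "X \<le> t")
  case True
  then have "X powr p \<le> t powr p" using X p by (intro powr_mono2) auto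
  moreover have "0 \<le> X^2 * t powr (p - 2)" by simp
  ultimately show ?thesis by linarith
next
  case False
  then have X0: "X > 0" using t by simp
  have "X powr p = X powr 2 * X powr (p - 2)" by (simp flip: powr_add)
  also have "X powr 2 = X^2" using X by simp
  also have "X powr (p - 2) \<le> t powr (p - 2)" using False t p by (intro powr_mono2') auto
  then have "X^2 * X powr (p - 2) \<le> X^2 * t powr (p - 2)" by (intro mult_left_mono) auto
  moreover have "0 \<le> t powr p" by simp
  ultimately show ?thesis by linarith
qed

lemma ptL:
  fixes X t p :: real
  assumes X: "0 \<le> X" and t: "0 < t" and p: "0 < p" "p < 2"
  shows "X^2 \<le> t powr (2 - p) * X powr p + X^4 / t^2"
proof (cases "X \<le> t")
  case True
  have "X^2 = X powr 2" using X by simp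
  also have "\<dots> = X powr (2 - p) * X powr p" by (simp flip: powr_add)
  also have "\<dots> \<le> t powr (2 - p) * X powr p"
    using True X p by (intro mult_right_mono powr_mono2) auto
  finally show ?thesis using t by (smt (verit) divide_nonneg_pos zero_le_power zero_less_power X)
next
  case False
  then have Xt: "t^2 \<le> X^2" using t by (intro power_mono) auto
  have "X^4 / t^2 = X^2 * (X^2 / t^2)" by (simp add: power2_eq_square power4_eq_xxxx)
  moreover have "X^2 / t^2 \<ge> 1" using Xt t by simp
  ultimately have "X^2 \<le> X^4 / t^2" by (metis mult_le_cancel_left1 zero_le_power2 order_trans linorder_not_le less_le_not_le mult.right_neutral mult_left_mono)
  moreover have "0 \<le> t powr (2 - p) * X powr p" by simp
  ultimately show ?thesis by linarith
qed

lemma sigma_zero_ss: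
  fixes a :: "nat \<Rightarrow> 'a::real_normed_field"
  assumes "finite A" "(\<Sum>n\<in>A. norm (a n)^2) = 0"
  shows "ss a A D = 0"
proof -
  have "\<forall>n\<in>A. norm (a n)^2 = 0" using assms sum_nonneg_eq_0_iff[of A "\<lambda>n. norm (a n)^2"] by simp
  then have "\<forall>n\<in>A. a n = 0" by simp
  then show ?thesis unfolding ss_def by (intro sum.neutral) auto
qed

lemma khin_upper:
  fixes a :: "nat \<Rightarrow> 'a::real_normed_field"
  assumes A: "finite A" and p: "0 < p" "p < 2"
  shows "(\<Sum>D\<in>Pow A. norm (ss a A D) powr p) \<le> 2 * 2^card A * (\<Sum>n\<in>A. norm (a n)^2) powr (p/2)"
proof -
  define \<sigma> where "\<sigma> = (\<Sum>n\<in>A. norm (a n)^2)"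
  define N where "N = (2::real)^card A"
  have s0: "\<sigma> \<ge> 0" unfolding \<sigma>_def by (intro sum_nonneg) auto
  show ?thesis
  proof (cases "\<sigma> = 0")
    case True
    then have "ss a A D = 0" for D using sigma_zero_ss[OF A] by (simp add: \<sigma>_def)
    then show ?thesis by simp
  next
    case False
    then have sp: "\<sigma> > 0" using s0 by simp
    define t where "t = sqrt \<sigma>"
    have t0: "t > 0" using sp by (simp add: t_def)
    have tp: "t powr p = \<sigma> powr (p/2)" using s0 by (simp add: t_def powr_half_sqrt[symmetric] powr_powr)
    have tp2: "t powr (p - 2) = \<sigma> powr ((p - 2)/2)" using s0 by (simp add: t_def powr_half_sqrt[symmetric] powr_powr)
    have "(\<Sum>D\<in>Pow A. norm (ss a A D) powr p) \<le> (\<Sum>D\<in>Pow A. t powr p + norm (ss a A D)^2 * t powr (p - 2))"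
      using t0 p by (intro sum_mono ptU) auto
    also have "\<dots> = N * t powr p + (\<Sum>D\<in>Pow A. norm (ss a A D)^2) * t powr (p - 2)"
      using A by (simp add: sum.distrib sum_distrib_right card_Pow N_def)
    also have "\<dots> = N * \<sigma> powr (p/2) + N * (\<sigma> * \<sigma> powr ((p - 2)/2))"
      using moment2[OF A, of a] by (simp add: tp tp2 N_def \<sigma>_def)
    also have "\<sigma> * \<sigma> powr ((p - 2)/2) = \<sigma> powr (p/2)"
      using s0 by (simp add: powr_mult_base add_divide_distrib[symmetric] diff_divide_distrib)
    finally show ?thesis by (simp add: N_def \<sigma>_def)
  qed
qed

lemma khin_lower:
  fixes a :: "nat \<Rightarrow> 'a::real_normed_field"
  assumes A: "finite A" and p: "0 < p" "p < 2"
  shows "2^card A * (\<Sum>n\<in>A. norm (a n)^2) powr (p/2) \<le> 12 * (\<Sum>D\<in>Pow A. norm (ss a A D) powr p)"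
proof -
  define \<sigma> where "\<sigma> = (\<Sum>n\<in>A. norm (a n)^2)"
  define N where "N = (2::real)^card A"
  define S where "S = (\<Sum>D\<in>Pow A. norm (ss a A D) powr p)"
  have s0: "\<sigma> \<ge> 0" unfolding \<sigma>_def by (intro sum_nonneg) auto
  have S0: "S \<ge> 0" unfolding S_def by (intro sum_nonneg) auto
  have N0: "N > 0" by (simp add: N_def)
  show ?thesis
  proof (cases "\<sigma> = 0")
    case True
    then show ?thesis using S0 by (simp add: \<sigma>_def S_def)
  next
    case False
    then have sp: "\<sigma> > 0" using s0 by simp
    define t where "t = sqrt (6 * \<sigma>)"
    have t0: "t > 0" using sp by (simp add: t_def)
    have tt: "t^2 = 6 * \<sigma>" using sp by (simp add: t_def)
    have "N * \<sigma> = (\<Sum>D\<in>Pow A. norm (ss a A D)^2)" using moment2[OF A, of a] by (simp add: N_def \<sigma>_def)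
    also have "\<dots> \<le> (\<Sum>D\<in>Pow A. t powr (2 - p) * norm (ss a A D) powr p + norm (ss a A D)^4 / t^2)"
      using t0 p by (intro sum_mono ptL) auto
    also have "\<dots> = t powr (2 - p) * S + (\<Sum>D\<in>Pow A. norm (ss a A D)^4) / t^2"
      by (simp add: sum.distrib sum_distrib_left sum_divide_distrib S_def)
    also have "(\<Sum>D\<in>Pow A. norm (ss a A D)^4) / t^2 \<le> (3 * N * \<sigma>^2) / t^2"
      using moment4[OF A, of a] t0 by (intro divide_right_mono) (auto simp: N_def \<sigma>_def)
    also have "(3 * N * \<sigma>^2) / t^2 = N * \<sigma> / 2" using sp tt by (simp add: power2_eq_square)
    finally have "N * \<sigma> / 2 \<le> t powr (2 - p) * S" by simp
    moreover have "t powr (2 - p) = 6 powr ((2 - p)/2) * \<sigma> powr ((2 - p)/2)"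
      using s0 by (simp add: t_def powr_half_sqrt[symmetric] powr_powr powr_mult)
    ultimately have "N * \<sigma> \<le> 2 * 6 powr ((2 - p)/2) * \<sigma> powr ((2 - p)/2) * S" by simp
    moreover have "\<sigma> = \<sigma> powr (p/2) * \<sigma> powr ((2 - p)/2)"
    proof -
      have "\<sigma> powr (p/2) * \<sigma> powr ((2 - p)/2) = \<sigma> powr (p/2 + (2 - p)/2)" by (simp add: powr_add)
      also have "p/2 + (2 - p)/2 = 1" by (simp add: field_simps)
      finally show ?thesis using s0 by simp
    qed
    ultimately have "(N * \<sigma> powr (p/2)) * \<sigma> powr ((2 - p)/2) \<le> (2 * 6 powr ((2 - p)/2) * S) * \<sigma> powr ((2 - p)/2)"
      by (simp add: algebra_simps)
    then have "N * \<sigma> powr (p/2) \<le> 2 * 6 powr ((2 - p)/2) * S"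
      using sp by (simp add: mult_le_cancel_right)
    also have "6 powr ((2 - p)/2) \<le> 6 powr 1" using p by (intro powr_mono) auto
    then have "2 * 6 powr ((2 - p)/2) * S \<le> 12 * S" using S0 by (intro mult_right_mono) auto
    finally show ?thesis by (simp add: N_def \<sigma>_def S_def)
  qed
qed



lemma powr_subadd:
  fixes u v p :: real
  assumes u: "0 \<le> u" and v: "0 \<le> v" and p: "0 < p" "p \<le> 1"
  shows "(u + v) powr p \<le> u powr p + v powr p"
proof (cases "u + v = 0")
  case True then show ?thesis by simp
next
  case False
  define s where "s = u + v"
  have s0: "s > 0" using False u v by (simp add: s_def)
  have "u/s \<le> (u/s) powr p"
  proof -
    have "(u/s) powr 1 \<le> (u/s) powr p" using p u v s0 by (intro powr_mono') (auto simp: s_def)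
    then show ?thesis using u s0 by simp
  qed
  moreover have "v/s \<le> (v/s) powr p"
  proof -
    have "(v/s) powr 1 \<le> (v/s) powr p" using p u v s0 by (intro powr_mono') (auto simp: s_def)
    then show ?thesis using v s0 by simp
  qed
  ultimately have "u/s + v/s \<le> (u powr p + v powr p) / s powr p" by (simp add: powr_divide add_divide_distrib)
  moreover have "u/s + v/s = 1" using s0 by (simp add: s_def add_divide_distrib[symmetric])
  ultimately have "s powr p \<le> u powr p + v powr p" using s0 by (simp add: le_divide_eq)
  then show ?thesis by (simp add: s_def)
qed

lemma powr_subadd_sum:
  fixes f :: "nat \<Rightarrow> real"
  assumes "finite A" "\<And>n. n \<in> A \<Longrightarrow> f n \<ge> 0" and p: "0 < p" "p \<le> 1"
  shows "(\<Sum>n\<in>A. f n) powr p \<le> (\<Sum>n\<in>A. f n powr p)"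
  using assms(1,2)
proof (induction A rule: finite_induct)
  case empty then show ?case by simp
next
  case (insert x A)
  have "(\<Sum>n\<in>insert x A. f n) powr p = (f x + (\<Sum>n\<in>A. f n)) powr p" using insert by simp
  also have "\<dots> \<le> f x powr p + (\<Sum>n\<in>A. f n) powr p"
    using insert p by (intro powr_subadd sum_nonneg) auto
  also have "\<dots> \<le> f x powr p + (\<Sum>n\<in>A. f n powr p)" using insert by simp
  finally show ?case using insert by simp
qed

lemma summable_bound:
  fixes x :: "nat \<Rightarrow> nat \<Rightarrow> 'a::real_normed_field" and g :: "nat \<Rightarrow> 'b::real_normed_vector"
  assumes A: "finite A" and sx: "\<And>n. summable (\<lambda>j. norm (x n j) powr p)"
    and gb: "\<And>j. norm (g j) \<le> (\<Sum>n\<in>A. norm (x n j))" and p: "0 < p" "p \<le> 1"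
  shows "summable (\<lambda>j. norm (g j) powr p)"
proof (rule summable_comparison_test'[of "\<lambda>j. \<Sum>n\<in>A. norm (x n j) powr p" 0])
  show "summable (\<lambda>j. \<Sum>n\<in>A. norm (x n j) powr p)" by (intro summable_sum sx)
next
  fix j
  have "norm (g j) powr p \<le> (\<Sum>n\<in>A. norm (x n j)) powr p" using gb p by (intro powr_mono2) auto
  also have "\<dots> \<le> (\<Sum>n\<in>A. norm (x n j) powr p)" using A p by (intro powr_subadd_sum) auto
  finally show "norm (norm (g j) powr p) \<le> (\<Sum>n\<in>A. norm (x n j) powr p)" by simp
qed

lemma comb_bound:
  fixes x :: "nat \<Rightarrow> nat \<Rightarrow> 'a::real_normed_field"
  assumes "\<And>n. n \<in> A \<Longrightarrow> norm (e n) \<le> 1"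
  shows "norm (\<Sum>n\<in>A. e n * x n j) \<le> (\<Sum>n\<in>A. norm (x n j))"
proof -
  have "norm (\<Sum>n\<in>A. e n * x n j) \<le> (\<Sum>n\<in>A. norm (e n * x n j))" by (rule norm_sum)
  also have "\<dots> \<le> (\<Sum>n\<in>A. norm (x n j))"
    using assms by (intro sum_mono) (auto simp: norm_mult intro: mult_left_le_one_le)
  finally show ?thesis .
qed

lemma Np_triangle:
  fixes f g :: "nat \<Rightarrow> 'a::real_normed_vector"
  assumes sf: "summable (\<lambda>j. norm (f j) powr p)" and sg: "summable (\<lambda>j. norm (g j) powr p)"
    and p: "0 < p" "p \<le> 1"
  shows "(\<Sum>j. norm (f j + g j) powr p) \<le> (\<Sum>j. norm (f j) powr p) + (\<Sum>j. norm (g j) powr p)"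
proof -
  have pt: "norm (f j + g j) powr p \<le> norm (f j) powr p + norm (g j) powr p" for j
  proof -
    have "norm (f j + g j) powr p \<le> (norm (f j) + norm (g j)) powr p"
      using p by (intro powr_mono2 norm_triangle_ineq) auto
    also have "\<dots> \<le> norm (f j) powr p + norm (g j) powr p" using p by (intro powr_subadd) auto
    finally show ?thesis .
  qed
  have ss: "summable (\<lambda>j. norm (f j) powr p + norm (g j) powr p)" by (intro summable_add sf sg)
  have "summable (\<lambda>j. norm (f j + g j) powr p)"
    by (rule summable_comparison_test'[OF ss, where N=0]) (use pt in auto)
  then have "(\<Sum>j. norm (f j + g j) powr p) \<le> (\<Sum>j. norm (f j) powr p + norm (g j) powr p)"
    by (intro suminf_le pt ss)
  also have "\<dots> = (\<Sum>j. norm (f j) powr p) + (\<Sum>j. norm (g j) powr p)" by (rule suminf_add[OF sf sg, symmetric])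
  finally show ?thesis .
qed

lemma norm_sq_powr:
  fixes r p :: real
  assumes "0 \<le> r"
  shows "(r^2) powr (p/2) = r powr p"
proof -
  have "r^2 = r powr 2" using assms by simp
  then show ?thesis by (simp add: powr_powr)
qed



theorem lemma3p4:
  fixes p :: real and x :: "nat \<Rightarrow> nat \<Rightarrow> 'a::{real_normed_field,banach}"
  assumes "0 < p" and "p < 1"
    and "basic_seq_lp p x" and "SUCC_lp p x"
  shows "\<exists>c C. 0 < c \<and> c \<le> C \<and> (\<forall>A. finite A \<longrightarrow>
           c * (\<Sum>j. (\<Sum>n\<in>A. norm (x n j) ^ 2) powr (p / 2)) powr (1 / p)
             \<le> lp_norm p (\<lambda>j. \<Sum>n\<in>A. x n j) \<and>
           lp_norm p (\<lambda>j. \<Sum>n\<in>A. x n j)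
             \<le> C * (\<Sum>j. (\<Sum>n\<in>A. norm (x n j) ^ 2) powr (p / 2)) powr (1 / p))"
proof -
  have p0: "0 < p" and p1: "p \<le> 1" and p2: "p < 2" using assms(1,2) by auto
  have "\<forall>n. x n \<in> lp_space p" using assms(3) unfolding basic_seq_lp_def by (rule conjunct1)
  then have sx: "\<And>n. summable (\<lambda>j. norm (x n j) powr p)" unfolding lp_space_def by blast
  obtain C where C1: "C \<ge> 1" and S: "\<forall>A B \<epsilon>. finite B \<longrightarrow> A \<subseteq> B \<longrightarrow> (\<forall>n\<in>B. norm (\<epsilon> n) = 1) \<longrightarrow>
        lp_norm p (\<lambda>j. \<Sum>n\<in>A. \<epsilon> n * x n j) \<le> C * lp_norm p (\<lambda>j. \<Sum>n\<in>B. \<epsilon> n * x n j)"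
    using assms(4) unfolding SUCC_lp_def by (elim exE conjE) (rule that)
  have succ: "\<And>A B \<epsilon>. finite B \<Longrightarrow> A \<subseteq> B \<Longrightarrow> (\<forall>n\<in>B. norm (\<epsilon> n) = 1) \<Longrightarrow>
        lp_norm p (\<lambda>j. \<Sum>n\<in>A. \<epsilon> n * x n j) \<le> C * lp_norm p (\<lambda>j. \<Sum>n\<in>B. \<epsilon> n * x n j)"
    using S by simp
  define Np where "Np = (\<lambda>f::nat \<Rightarrow> 'a. (\<Sum>j. norm (f j) powr p))"
  have lpN: "lp_norm p f = Np f powr (1/p)" for f by (simp add: lp_norm_def Np_def)
  have scomb: "summable (\<lambda>j. norm (\<Sum>n\<in>A. \<epsilon> n * x n j) powr p)"
    if "finite A" "\<And>n. n \<in> A \<Longrightarrow> norm (\<epsilon> n) \<le> 1" for A \<epsilon>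
  proof -
    have "\<And>j. norm (\<Sum>n\<in>A. \<epsilon> n * x n j) \<le> (\<Sum>n\<in>A. norm (x n j))"
      by (rule comb_bound) (rule that(2))
    then show ?thesis by (rule summable_bound[where x=x, OF that(1) sx _ p0 p1])
  qed
  have Np0: "Np (\<lambda>j. \<Sum>n\<in>A. \<epsilon> n * x n j) \<ge> 0"
    if "finite A" "\<And>n. n \<in> A \<Longrightarrow> norm (\<epsilon> n) \<le> 1" for A \<epsilon>
    unfolding Np_def by (intro suminf_nonneg scomb[OF that]) auto
  have succp: "Np (\<lambda>j. \<Sum>n\<in>A'. \<epsilon> n * x n j) \<le> C powr p * Np (\<lambda>j. \<Sum>n\<in>B. \<epsilon> n * x n j)"
    if B: "finite B" "A' \<subseteq> B" "\<forall>n\<in>B. norm (\<epsilon> n) = 1" for A' B \<epsilon>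
  proof -
    have fA: "finite A'" using B finite_subset by blast
    have n1: "Np (\<lambda>j. \<Sum>n\<in>A'. \<epsilon> n * x n j) \<ge> 0" using B fA by (intro Np0) auto
    have n2: "Np (\<lambda>j. \<Sum>n\<in>B. \<epsilon> n * x n j) \<ge> 0" using B by (intro Np0) auto
    have "Np (\<lambda>j. \<Sum>n\<in>A'. \<epsilon> n * x n j) powr (1/p) \<le> C * Np (\<lambda>j. \<Sum>n\<in>B. \<epsilon> n * x n j) powr (1/p)"
      using succ[OF B] by (simp add: lpN)
    then have "(Np (\<lambda>j. \<Sum>n\<in>A'. \<epsilon> n * x n j) powr (1/p)) powr p \<le> (C * Np (\<lambda>j. \<Sum>n\<in>B. \<epsilon> n * x n j) powr (1/p)) powr p"
      using p0 by (intro powr_mono2) auto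
    then show ?thesis using n1 n2 C1 p0 by (simp add: powr_powr powr_mult)
  qed
  define c0 where "c0 = 1 / (24 powr (1/p) * C)"
  define C0 where "C0 = 4 powr (1/p) * C"
  have c0pos: "c0 > 0" using C1 by (simp add: c0_def)
  have g1: "24 powr (1/p) \<ge> (1::real)" "4 powr (1/p) \<ge> (1::real)" using p0 by (auto intro: ge_one_powr_ge_zero)
  have c0le: "c0 \<le> C0"
  proof -
    have d1: "1 * 1 \<le> 24 powr (1/p) * C" using C1 g1 by (intro mult_mono) auto
    then have "c0 \<le> 1" by (simp add: c0_def)
    moreover have "1 * 1 \<le> C0" using C1 g1 unfolding C0_def by (intro mult_mono) auto
    ultimately show ?thesis by simp
  qed
  have main: "c0 * (\<Sum>j. (\<Sum>n\<in>A. norm (x n j) ^ 2) powr (p / 2)) powr (1 / p) \<le> lp_norm p (\<lambda>j. \<Sum>n\<in>A. x n j) \<and>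
           lp_norm p (\<lambda>j. \<Sum>n\<in>A. x n j) \<le> C0 * (\<Sum>j. (\<Sum>n\<in>A. norm (x n j) ^ 2) powr (p / 2)) powr (1 / p)"
    if A: "finite A" for A
  proof -
    define eD where "eD = (\<lambda>(D::nat set) (n::nat). if n \<in> D then - 1 else (1::'a))"
    define y where "y = (\<lambda>D j. \<Sum>n\<in>A. eD D n * x n j)"
    define T where "T = Np (\<lambda>j. \<Sum>n\<in>A. x n j)"
    define sig where "sig = (\<lambda>j. (\<Sum>n\<in>A. norm (x n j) ^ 2))"
    define Sg where "Sg = (\<Sum>j. sig j powr (p/2))"
    define N where "N = (2::real) ^ card A"
    have N0: "N > 0" by (simp add: N_def)
    have eD1: "norm (eD D n) = 1" for D n by (simp add: eD_def)
    have one: "(\<lambda>j. \<Sum>n\<in>A. x n j) = (\<lambda>j. \<Sum>n\<in>A. (\<lambda>_. 1::'a) n * x n j)" by simp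
    have T0: "T \<ge> 0" unfolding T_def by (subst one) (intro Np0 A, simp)
    have yss: "y D j = ss (\<lambda>n. x n j) A D" for D j
      unfolding y_def ss_def eD_def by (intro sum.cong) auto
    have sy: "summable (\<lambda>j. norm (y D j) powr p)" for D
      unfolding y_def by (intro scomb A) (simp add: eD1)
    have ssig: "summable (\<lambda>j. sig j powr (p/2))"
    proof (rule summable_comparison_test'[where N=0])
      show "summable (\<lambda>j. \<Sum>n\<in>A. norm (x n j) powr p)" by (intro summable_sum sx)
    next
      fix j
      have "sig j powr (p/2) \<le> (\<Sum>n\<in>A. (norm (x n j) ^ 2) powr (p/2))"
        unfolding sig_def using A p0 p1 by (intro powr_subadd_sum) auto
      also have "\<dots> = (\<Sum>n\<in>A. norm (x n j) powr p)" by (simp add: norm_sq_powr)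
      finally show "norm (sig j powr (p/2)) \<le> (\<Sum>n\<in>A. norm (x n j) powr p)" by simp
    qed
    have Sg0: "Sg \<ge> 0" unfolding Sg_def by (intro suminf_nonneg ssig) auto
    have sumD: "(\<Sum>j. \<Sum>D\<in>Pow A. norm (y D j) powr p) = (\<Sum>D\<in>Pow A. Np (y D))"
      unfolding Np_def by (intro suminf_sum sy)
    have ssumD: "summable (\<lambda>j. \<Sum>D\<in>Pow A. norm (y D j) powr p)" by (intro summable_sum sy)
    have cl1: "Np (y D) \<le> 2 * C powr p * T" if D: "D \<subseteq> A" for D
    proof -
      have fD: "finite D" "finite (A - D)" using A D finite_subset by auto
      define f where "f = (\<lambda>j. \<Sum>n\<in>A - D. (\<lambda>_. 1::'a) n * x n j)"
      define g where "g = (\<lambda>j. \<Sum>n\<in>D. (\<lambda>_. 1::'a) n * x n j)"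
      have yfg: "y D j = f j + - g j" for j
      proof -
        have "y D j = (\<Sum>n\<in>A - D. eD D n * x n j) + (\<Sum>n\<in>D. eD D n * x n j)"
          unfolding y_def by (rule sum.subset_diff[OF D A])
        also have "(\<Sum>n\<in>A - D. eD D n * x n j) = f j" unfolding f_def eD_def by (intro sum.cong) auto
        also have "(\<Sum>n\<in>D. eD D n * x n j) = - g j" unfolding g_def eD_def by (simp add: sum_negf)
        finally show ?thesis .
      qed
      have sf: "summable (\<lambda>j. norm (f j) powr p)" unfolding f_def by (intro scomb fD) auto
      have sg: "summable (\<lambda>j. norm (- g j) powr p)" unfolding g_def norm_minus_cancel by (intro scomb fD) auto
      have "Np (y D) \<le> Np f + Np (\<lambda>j. - g j)"
        unfolding Np_def yfg by (rule Np_triangle[OF sf sg p0 p1])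
      also have "Np (\<lambda>j. - g j) = Np g" by (simp add: Np_def)
      also have "Np f \<le> C powr p * T" unfolding f_def T_def using A D by (subst one) (intro succp, auto)
      also have "Np g \<le> C powr p * T" unfolding g_def T_def using A D by (subst one) (intro succp, auto)
      finally show ?thesis by (simp add: mult_ac)
    qed
    have cl2: "T \<le> 2 * C powr p * Np (y D)" if D: "D \<subseteq> A" for D
    proof -
      have fD: "finite D" "finite (A - D)" using A D finite_subset by auto
      define f where "f = (\<lambda>j. \<Sum>n\<in>A - D. eD D n * x n j)"
      define g where "g = (\<lambda>j. \<Sum>n\<in>D. eD D n * x n j)"
      have xfg: "(\<Sum>n\<in>A. x n j) = f j + - g j" for j
      proof -
        have "(\<Sum>n\<in>A. x n j) = (\<Sum>n\<in>A - D. x n j) + (\<Sum>n\<in>D. x n j)"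
          by (rule sum.subset_diff[OF D A])
        also have "(\<Sum>n\<in>A - D. x n j) = f j" unfolding f_def eD_def by (intro sum.cong) auto
        also have "(\<Sum>n\<in>D. x n j) = - g j" unfolding g_def eD_def by (simp add: sum_negf)
        finally show ?thesis .
      qed
      have sf: "summable (\<lambda>j. norm (f j) powr p)" unfolding f_def by (intro scomb fD) (simp add: eD1)
      have sg: "summable (\<lambda>j. norm (- g j) powr p)" unfolding g_def norm_minus_cancel by (intro scomb fD) (simp add: eD1)
      have "T \<le> Np f + Np (\<lambda>j. - g j)"
        unfolding T_def Np_def xfg by (rule Np_triangle[OF sf sg p0 p1])
      also have "Np (\<lambda>j. - g j) = Np g" by (simp add: Np_def)
      also have "Np f \<le> C powr p * Np (y D)" unfolding f_def y_def using A D eD1 by (intro succp) auto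
      also have "Np g \<le> C powr p * Np (y D)" unfolding g_def y_def using A D eD1 by (intro succp) auto
      finally show ?thesis by (simp add: mult_ac)
    qed
    have "N * Sg = (\<Sum>j. N * sig j powr (p/2))" unfolding Sg_def by (rule suminf_mult[OF ssig, symmetric])
    also have "\<dots> \<le> (\<Sum>j. 12 * (\<Sum>D\<in>Pow A. norm (y D j) powr p))"
    proof (rule suminf_le)
      show "summable (\<lambda>j. N * sig j powr (p/2))" by (intro summable_mult ssig)
      show "summable (\<lambda>j. 12 * (\<Sum>D\<in>Pow A. norm (y D j) powr p))" by (intro summable_mult ssumD)
      fix j show "N * sig j powr (p/2) \<le> 12 * (\<Sum>D\<in>Pow A. norm (y D j) powr p)"
        using khin_lower[OF A p0 p2, of "\<lambda>n. x n j"] by (simp add: N_def sig_def yss)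
    qed
    also have "\<dots> = 12 * (\<Sum>D\<in>Pow A. Np (y D))" using suminf_mult[OF ssumD, of 12] sumD by simp
    also have "\<dots> \<le> 12 * (\<Sum>D\<in>Pow A. 2 * C powr p * T)" by (intro mult_left_mono sum_mono cl1) auto
    also have "\<dots> = N * (24 * C powr p * T)" using A by (simp add: N_def card_Pow)
    finally have low: "Sg \<le> 24 * C powr p * T" using N0 by simp
    have "N * T = (\<Sum>D\<in>Pow A. T)" using A by (simp add: N_def card_Pow)
    also have "\<dots> \<le> (\<Sum>D\<in>Pow A. 2 * C powr p * Np (y D))" by (intro sum_mono cl2) auto
    also have "\<dots> = 2 * C powr p * (\<Sum>j. \<Sum>D\<in>Pow A. norm (y D j) powr p)" by (simp add: sumD sum_distrib_left)
    also have "(\<Sum>j. \<Sum>D\<in>Pow A. norm (y D j) powr p) \<le> (\<Sum>j. 2 * N * sig j powr (p/2))"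
    proof (rule suminf_le)
      show "summable (\<lambda>j. 2 * N * sig j powr (p/2))" by (intro summable_mult ssig)
      show "summable (\<lambda>j. \<Sum>D\<in>Pow A. norm (y D j) powr p)" by (rule ssumD)
      fix j show "(\<Sum>D\<in>Pow A. norm (y D j) powr p) \<le> 2 * N * sig j powr (p/2)"
        using khin_upper[OF A p0 p2, of "\<lambda>n. x n j"] by (simp add: N_def sig_def yss)
    qed
    also have "(\<Sum>j. 2 * N * sig j powr (p/2)) = 2 * N * Sg" unfolding Sg_def by (rule suminf_mult[OF ssig])
    finally have "N * T \<le> 2 * C powr p * (2 * N * Sg)" using C1 by (simp add: mult_left_mono)
    then have up: "T \<le> 4 * C powr p * Sg" using N0 by (simp add: algebra_simps)
    have Cp: "(C powr p) powr (1/p) = C" using C1 p0 by (simp add: powr_powr)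
    have "Sg powr (1/p) \<le> (24 * C powr p * T) powr (1/p)" using low Sg0 p0 by (intro powr_mono2) auto
    also have "\<dots> = 24 powr (1/p) * C * T powr (1/p)" using C1 T0 by (simp add: powr_mult Cp)
    finally have "c0 * Sg powr (1/p) \<le> c0 * (24 powr (1/p) * C * T powr (1/p))" using c0pos by simp
    also have "\<dots> = T powr (1/p)" using C1 g1 by (simp add: c0_def)
    finally have L: "c0 * Sg powr (1/p) \<le> T powr (1/p)" .
    have "T powr (1/p) \<le> (4 * C powr p * Sg) powr (1/p)" using up T0 p0 by (intro powr_mono2) auto
    also have "\<dots> = C0 * Sg powr (1/p)" using C1 Sg0 by (simp add: powr_mult Cp C0_def)
    finally have U: "T powr (1/p) \<le> C0 * Sg powr (1/p)" .
    show ?thesis using L U by (simp add: lpN T_def Sg_def sig_def)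
  qed
  show ?thesis using c0pos c0le main by blast
qed


end
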